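(* Let $n\ge 2$ and let $k$ be a positive integer dividing $n$. Let $f=(f^m)_{m\in\mathbb{N}}$ be a family of functions $f^m:\{0,1\}^m\to\mathbb{R}_{\ge 0}$ such that $1^m$ is the unique optimum of $f^m$. Define $LO_k^f:\{0,1\}^n\to\mathbb{R}_{\ge0}$ by $$LO_k^f(x)=\sum_{i=0}^{n/k-1} f^k(x_{ik}x_{ik+1}\dots x_{ik+k-1})\cdot\prod_{j=0}^{ik-1}x_j .$$ Let $T$ be the run time of the (1+1) EA (with mutation probability $1/n$) maximizing $LO_k^f$ on bit strings of length $n$, and let $T_k^n$ be the run time of the (1+1) EA maximizing $f^k$ on bit strings of length $k$ but with bit flip probability $1/n$. Then $$E(T)=E(T_k^n)\,\frac{\left(\frac{n}{n-1}\right)^n-1}{\left(\frac{n}{n-1}\right)^k-1}\in\Theta\!\left(E(T_k^n)\frac{n}{k}\right).$$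
   Context: The (1+1) EA with bit flip probability $p$ maximizing $g:\{0,1\}^m\to\mathbb{R}$: start with $x$ drawn uniformly at random from $\{0,1\}^m$; in each iteration create $y$ by flipping each bit of $x$ independently with probability $p$, and set $x\gets y$ if $g(y)\ge g(x)$. The run time is the number of iterations until the optimum is first the current solution. *)

theory Defs
  imports "HOL-Probability.Probability"
begin

text \<open>Bit strings of length m are bool lists of length m (True = bit 1).\<close>

fun mutate :: "real \<Rightarrow> bool list \<Rightarrow> bool list pmf" where
  "mutate p [] = return_pmf []"
| "mutate p (b # bs) =
     bind_pmf (bernoulli_pmf p)
       (\<lambda>flip. map_pmf (\<lambda>r. (if flip then \<not> b else b) # r) (mutate p bs))"

definition ea_step :: "real \<Rightarrow> (bool list \<Rightarrow> real) \<Rightarrow> bool list \<Rightarrow> bool list pmf" where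
  "ea_step p g x = map_pmf (\<lambda>y. if g y \<ge> g x then y else x) (mutate p x)"

definition ea_init :: "nat \<Rightarrow> bool list pmf" where
  "ea_init m = pmf_of_set {xs :: bool list. length xs = m}"

definition is_opt :: "(bool list \<Rightarrow> real) \<Rightarrow> nat \<Rightarrow> bool list \<Rightarrow> bool" where
  "is_opt g m x \<longleftrightarrow> length x = m \<and> (\<forall>y. length y = m \<longrightarrow> g y \<le> g x)"

text \<open>Distribution of (current solution after t iterations, whether an optimum has
  been the current solution at some time 0..t).\<close>
fun ea_chain :: "real \<Rightarrow> (bool list \<Rightarrow> real) \<Rightarrow> nat \<Rightarrow> nat \<Rightarrow> (bool list \<times> bool) pmf" where
  "ea_chain p g m 0 = map_pmf (\<lambda>x. (x, is_opt g m x)) (ea_init m)"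
| "ea_chain p g m (Suc t) =
     bind_pmf (ea_chain p g m t)
       (\<lambda>(x, h). map_pmf (\<lambda>y. (y, h \<or> is_opt g m y)) (ea_step p g x))"

text \<open>Expected run time E(T) via the tail-sum formula E(T) = sum_t P(T > t),
  where T > t iff no optimum was the current solution at times 0..t.\<close>
definition ea_runtime :: "real \<Rightarrow> (bool list \<Rightarrow> real) \<Rightarrow> nat \<Rightarrow> ennreal" where
  "ea_runtime p g m = (\<Sum>t. ennreal (measure_pmf.prob (ea_chain p g m t) {s. \<not> snd s}))"

definition LO_k :: "(nat \<Rightarrow> bool list \<Rightarrow> real) \<Rightarrow> nat \<Rightarrow> nat \<Rightarrow> bool list \<Rightarrow> real" where
  "LO_k f n k x = (\<Sum>i<n div k. f k (take k (drop (i * k) x)) *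
                     (\<Prod>j<i * k. if x ! j then 1 else 0))"

definition LO_ratio :: "nat \<Rightarrow> nat \<Rightarrow> real" where
  "LO_ratio n k = ((real n / (real n - 1)) ^ n - 1) / ((real n / (real n - 1)) ^ k - 1)"

end

theory Submission imports Defs begin

definition Lm :: "nat \<Rightarrow> bool list set" where "Lm m = {xs. length xs = m}"

lemma Lm_finite[simp]: "finite (Lm m)"
  unfolding Lm_def using finite_lists_length_eq[of "UNIV::bool set" m] by simp

lemma Lm_card: "card (Lm m) = 2 ^ m"
  unfolding Lm_def using card_lists_length_eq[of "UNIV::bool set" m] by simp

lemma Lm_ne: "Lm m \<noteq> {}"
  unfolding Lm_def by (auto intro!: exI[of _ "replicate m True"])

fun mm :: "real \<Rightarrow> bool list \<Rightarrow> bool list \<Rightarrow> real" where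
  "mm p [] [] = 1"
| "mm p (b#bs) (c#cs) = (if b = c then 1 - p else p) * mm p bs cs"
| "mm p _ _ = 0"

lemma pmf_map_Cons: "pmf (map_pmf ((#) d) P) ys = (case ys of [] \<Rightarrow> 0 | c#cs \<Rightarrow> if c = d then pmf P cs else 0)"
proof (cases "ys \<in> range ((#) d)")
  case True
  then obtain cs where ys: "ys = d # cs" by auto
  have "inj ((#) d)" by (auto simp: inj_def)
  from pmf_map_inj'[OF this] show ?thesis unfolding ys by simp
next
  case False
  then have "ys \<notin> set_pmf (map_pmf ((#) d) P)" by auto
  then have "pmf (map_pmf ((#) d) P) ys = 0" by (simp add: set_pmf_eq)
  moreover have "(case ys of [] \<Rightarrow> 0 | c#cs \<Rightarrow> if c = d then pmf P cs else 0) = 0"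
    using False by (cases ys) auto
  ultimately show ?thesis by simp
qed

lemma pmf_mutate: "0 \<le> p \<Longrightarrow> p \<le> 1 \<Longrightarrow> pmf (mutate p xs) ys = mm p xs ys"
proof (induction xs arbitrary: ys)
  case Nil
  then show ?case by (cases ys) auto
next
  case (Cons b bs)
  have "pmf (mutate p (b # bs)) ys =
     (\<integral>flip. pmf (map_pmf ((#) (if flip then \<not> b else b)) (mutate p bs)) ys \<partial>bernoulli_pmf p)"
    by (simp only: mutate.simps pmf_bind)
  also have "\<dots> = pmf (map_pmf ((#) (\<not> b)) (mutate p bs)) ys * p + pmf (map_pmf ((#) b) (mutate p bs)) ys * (1 - p)"
    using Cons.prems by (simp only: integral_bernoulli_pmf if_True if_False)
  also have "\<dots> = mm p (b # bs) ys"
  proof (cases ys)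
    case Nil
    then show ?thesis by (simp add: pmf_map_Cons)
  next
    case (Cons c cs)
    then show ?thesis using Cons.IH[OF Cons.prems, of cs] by (cases b; cases c) (simp_all add: pmf_map_Cons)
  qed
  finally show ?case .
qed

lemma mutate_len: "ys \<in> set_pmf (mutate p xs) \<Longrightarrow> length ys = length xs"
  by (induction xs arbitrary: ys) auto

lemma mm_len: "mm p xs ys \<noteq> 0 \<Longrightarrow> length xs = length ys"
  by (induction p xs ys rule: mm.induct) auto

lemma mm_sym: "mm p xs ys = mm p ys xs"
  by (induction p xs ys rule: mm.induct) auto

lemma mm_nonneg: "0 \<le> p \<Longrightarrow> p \<le> 1 \<Longrightarrow> mm p xs ys \<ge> 0"
  by (induction p xs ys rule: mm.induct) auto

lemma mm_append: "length a = length a' \<Longrightarrow> mm p (a @ r) (a' @ r') = mm p a a' * mm p r r'"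
  by (induction a a' rule: list_induct2) auto

lemma mm_one: "mm p (replicate k True) (replicate k True) = (1 - p) ^ k"
  by (induction k) auto

lemma mm_lower:
  assumes "0 \<le> p" "p \<le> 1" "length xs = length ys"
  shows "mm p xs ys \<ge> min p (1 - p) ^ length xs"
  using assms(3)
proof (induction xs ys rule: list_induct2)
  case Nil
  then show ?case by simp
next
  case (Cons x xs y ys)
  have "min p (1-p) \<le> (if x = y then 1 - p else p)" by auto
  moreover have "min p (1-p) ^ length xs \<ge> 0" using assms by auto
  moreover have "min p (1-p) \<ge> 0" using assms by auto
  ultimately show ?case using Cons
    by (auto intro: mult_mono)
qed

lemma mm_sum: assumes "0 \<le> p" "p \<le> 1" "length x = m" shows "(\<Sum>y\<in>Lm m. mm p x y) = 1"
proof -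
  have "set_pmf (mutate p x) \<subseteq> Lm m" using mutate_len[of _ p x] assms by (auto simp: Lm_def)
  from sum_pmf_eq_1[OF Lm_finite this] show ?thesis using assms by (simp add: pmf_mutate)
qed

lemma mm_sum': "0 \<le> p \<Longrightarrow> p \<le> 1 \<Longrightarrow> length x = m \<Longrightarrow> (\<Sum>y\<in>Lm m. mm p y x) = 1"
  using mm_sum[of p x m] mm_sym[of p x] by simp


lemma measure_sum_pmf:
  assumes "finite S" "set_pmf M \<subseteq> S"
  shows "measure_pmf.prob M A = (\<Sum>z\<in>S \<inter> A. pmf M z)"
proof -
  have "measure_pmf.prob M A = measure_pmf.prob M (A \<inter> set_pmf M)" by (simp add: measure_Int_set_pmf)
  also have "\<dots> = sum (pmf M) (A \<inter> set_pmf M)"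
    using assms by (intro measure_measure_pmf_finite) (auto intro: finite_subset)
  also have "\<dots> = sum (pmf M) (S \<inter> A)"
    using assms by (intro sum.mono_neutral_left) (auto simp: set_pmf_eq)
  finally show ?thesis .
qed

definition rho :: "real \<Rightarrow> (bool list \<Rightarrow> real) \<Rightarrow> nat \<Rightarrow> bool list \<Rightarrow> real" where
  "rho p g m y = (\<Sum>z\<in>{z\<in>Lm m. g z < g y}. mm p y z)"

lemma mutate_Lm: "length x = m \<Longrightarrow> set_pmf (mutate p x) \<subseteq> Lm m"
  using mutate_len[of _ p x] by (auto simp: Lm_def)

lemma ea_step_Lm: "length x = m \<Longrightarrow> set_pmf (ea_step p g x) \<subseteq> Lm m"
  using mutate_len[of _ p x] by (auto simp: Lm_def ea_step_def)

lemma K_expand: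
  assumes p: "0 \<le> p" "p \<le> 1" and x: "length x = m" and y: "length y = m"
  shows "pmf (ea_step p g x) y = (if g x \<le> g y then mm p x y else 0) + (if y = x then rho p g m x else 0)"
proof -
  let ?h = "\<lambda>z. if g x \<le> g z then z else x"
  have "pmf (ea_step p g x) y = measure_pmf.prob (mutate p x) (?h -` {y})"
    by (simp add: ea_step_def pmf_map)
  also have "\<dots> = (\<Sum>z\<in>Lm m \<inter> ?h -` {y}. pmf (mutate p x) z)"
    by (rule measure_sum_pmf[OF Lm_finite mutate_Lm[OF x]])
  also have "\<dots> = (\<Sum>z\<in>{z\<in>Lm m. ?h z = y}. mm p x z)"
    by (rule sum.cong) (auto simp: pmf_mutate p)
  also have "\<dots> = (\<Sum>z\<in>Lm m. if ?h z = y then mm p x z else 0)"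
    by (rule sum.inter_filter) simp
  also have "\<dots> = (\<Sum>z\<in>Lm m. (if z = y then (if g x \<le> g y then mm p x y else 0) else 0)
                     + (if y = x then (if g z < g x then mm p x z else 0) else 0))"
    by (intro sum.cong) auto
  also have "\<dots> = (\<Sum>z\<in>Lm m. (if z = y then (if g x \<le> g y then mm p x y else 0) else 0))
                     + (\<Sum>z\<in>Lm m. (if y = x then (if g z < g x then mm p x z else 0) else 0))"
    by (rule sum.distrib)
  also have "\<dots> = (if g x \<le> g y then mm p x y else 0) + (if y = x then rho p g m x else 0)"
  proof -
    have s1: "(\<Sum>z\<in>Lm m. if z = y then c else 0) = c" for c :: real
    proof -
      have "y \<in> Lm m" using y by (simp add: Lm_def)
      then show ?thesis by simp
    qed
    have s2: "(\<Sum>z\<in>Lm m. (if y = x then (if g z < g x then mm p x z else 0) else 0)) = (if y = x then rho p g m x else 0)"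
      by (cases "y = x") (simp_all add: rho_def sum.inter_filter)
    show ?thesis by (simp only: s1 s2)
  qed
  finally show ?thesis .
qed

lemma sumK:
  assumes p: "0 \<le> p" "p \<le> 1" and y: "y \<in> Lm m"
  shows "(\<Sum>x\<in>Lm m. V x * pmf (ea_step p g x) y)
       = (\<Sum>x\<in>Lm m. V x * (if g x \<le> g y then mm p x y else 0)) + V y * rho p g m y"
proof -
  have "(\<Sum>x\<in>Lm m. V x * pmf (ea_step p g x) y)
      = (\<Sum>x\<in>Lm m. V x * (if g x \<le> g y then mm p x y else 0) + (if y = x then V y * rho p g m y else 0))"
    using y by (intro sum.cong) (auto simp: K_expand[OF p] Lm_def algebra_simps)
  also have "\<dots> = (\<Sum>x\<in>Lm m. V x * (if g x \<le> g y then mm p x y else 0)) + V y * rho p g m y"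
    using y by (simp add: sum.distrib)
  finally show ?thesis .
qed

lemma K_sum: "0 \<le> p \<Longrightarrow> p \<le> 1 \<Longrightarrow> x \<in> Lm m \<Longrightarrow> (\<Sum>y\<in>Lm m. pmf (ea_step p g x) y) = 1"
  by (rule sum_pmf_eq_1[OF Lm_finite ea_step_Lm]) (auto simp: Lm_def)

definition Sol :: "real \<Rightarrow> (bool list \<Rightarrow> real) \<Rightarrow> nat \<Rightarrow> (bool list \<Rightarrow> real) \<Rightarrow> bool" where
  "Sol p g m V \<longleftrightarrow> (\<forall>y\<in>Lm m. V y = (if is_opt g m y then 0 else 1 / 2 ^ m + (\<Sum>x\<in>Lm m. V x * pmf (ea_step p g x) y)))"

definition Phi :: "real \<Rightarrow> (bool list \<Rightarrow> real) \<Rightarrow> nat \<Rightarrow> (bool list \<Rightarrow> real) \<Rightarrow> bool list \<Rightarrow> real" where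
  "Phi p g m F y = (if is_opt g m y then 0 else (\<Sum>x\<in>Lm m. F x * pmf (ea_step p g x) y))"

definition w :: "real \<Rightarrow> (bool list \<Rightarrow> real) \<Rightarrow> nat \<Rightarrow> nat \<Rightarrow> bool list \<Rightarrow> real" where
  "w p g m t y = pmf (ea_chain p g m t) (y, False)"

lemma ea_init_Lm: "ea_init m = pmf_of_set (Lm m)" by (simp add: ea_init_def Lm_def)

lemma chain_support: "set_pmf (ea_chain p g m t) \<subseteq> Lm m \<times> UNIV"
proof (induction t)
  case 0
  then show ?case using Lm_ne[of m] by (auto simp: ea_init_Lm)
next
  case (Suc t)
  then show ?case using ea_step_Lm[of _ m p g] by (fastforce simp: Lm_def)
qed

lemma prob_eq: "measure_pmf.prob (ea_chain p g m t) {s. \<not> snd s} = (\<Sum>y\<in>Lm m. w p g m t y)"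
proof -
  have "measure_pmf.prob (ea_chain p g m t) {s. \<not> snd s} = (\<Sum>z\<in>(Lm m \<times> UNIV) \<inter> {s. \<not> snd s}. pmf (ea_chain p g m t) z)"
    by (rule measure_sum_pmf[OF _ chain_support]) simp
  also have "(Lm m \<times> UNIV) \<inter> {s. \<not> snd s} = Lm m \<times> {False}" by auto
  also have "(\<Sum>z\<in>Lm m \<times> {False}. pmf (ea_chain p g m t) z) = (\<Sum>y\<in>Lm m. w p g m t y)"
  proof -
    have "Lm m \<times> {False} = (\<lambda>y. (y, False)) ` Lm m" by auto
    then show ?thesis by (simp add: sum.reindex inj_on_def w_def)
  qed
  finally show ?thesis .
qed

lemma w0: "y \<in> Lm m \<Longrightarrow> w p g m 0 y = (if is_opt g m y then 0 else 1 / 2 ^ m)"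
proof -
  assume y: "y \<in> Lm m"
  have "w p g m 0 y = measure_pmf.prob (ea_init m) ((\<lambda>x. (x, is_opt g m x)) -` {(y, False)})"
    by (simp add: w_def pmf_map)
  also have "(\<lambda>x. (x, is_opt g m x)) -` {(y, False)} = (if is_opt g m y then {} else {y})" by auto
  finally show ?thesis using y Lm_ne[of m]
    by (auto simp: measure_pmf_single ea_init_Lm Lm_card)
qed

lemma wSuc:
  assumes y: "y \<in> Lm m"
  shows "w p g m (Suc t) y = Phi p g m (w p g m t) y"
proof -
  have inner: "pmf (map_pmf (\<lambda>y'. (y', h \<or> is_opt g m y')) (ea_step p g x)) (y, False)
        = (if h \<or> is_opt g m y then 0 else pmf (ea_step p g x) y)" for x h
  proof -
    have "(\<lambda>y'. (y', h \<or> is_opt g m y')) -` {(y, False)} = (if h \<or> is_opt g m y then {} else {y})" by auto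
    then show ?thesis by (simp add: pmf_map measure_pmf_single)
  qed
  have "w p g m (Suc t) y = (\<integral>s. pmf ((\<lambda>(x, h). map_pmf (\<lambda>y. (y, h \<or> is_opt g m y)) (ea_step p g x)) s) (y, False) \<partial>ea_chain p g m t)"
    by (simp add: w_def pmf_bind)
  also have "\<dots> = (\<integral>s. (if snd s \<or> is_opt g m y then 0 else pmf (ea_step p g (fst s)) y) \<partial>ea_chain p g m t)"
    apply (rule Bochner_Integration.integral_cong[OF refl])
    subgoal for s by (cases s) (simp only: inner prod.case fst_conv snd_conv)
    done
  also have "\<dots> = (\<Sum>s\<in>(\<lambda>x. (x, False)) ` Lm m. pmf (ea_chain p g m t) s * (if snd s \<or> is_opt g m y then 0 else pmf (ea_step p g (fst s)) y))"
    using chain_support[of p g m t] by (subst integral_measure_pmf[where A="(\<lambda>x. (x, False)) ` Lm m"]) (auto split: if_splits)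
  also have "\<dots> = Phi p g m (w p g m t) y"
    by (simp add: sum.reindex inj_on_def Phi_def w_def)
  finally show ?thesis .
qed


lemma K_nonneg: "pmf (ea_step p g x) y \<ge> 0" by simp

lemma Phi_nonneg: "(\<forall>x\<in>Lm m. F x \<ge> 0) \<Longrightarrow> Phi p g m F y \<ge> 0"
  by (auto simp: Phi_def intro!: sum_nonneg)

lemma Phi_add: "(\<forall>x\<in>Lm m. F x = F1 x + F2 x) \<Longrightarrow> Phi p g m F y = Phi p g m F1 y + Phi p g m F2 y"
  by (auto simp: Phi_def sum.distrib[symmetric] algebra_simps intro!: sum.cong)

lemma K_opt_lower:
  assumes p: "0 \<le> p" "p \<le> 1" and u: "is_opt g m u" and x: "x \<in> Lm m"
  shows "pmf (ea_step p g x) u \<ge> min p (1 - p) ^ m"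
proof -
  have lu: "length u = m" and gu: "g x \<le> g u" using u x by (auto simp: is_opt_def Lm_def)
  have "rho p g m x \<ge> 0" unfolding rho_def using p by (auto intro!: sum_nonneg mm_nonneg)
  then have "pmf (ea_step p g x) u \<ge> mm p x u"
    using K_expand[OF p, of x m u g] x lu gu by (auto simp: Lm_def)
  moreover have "mm p x u \<ge> min p (1 - p) ^ m" using mm_lower[OF p, of x u] x lu by (auto simp: Lm_def)
  ultimately show ?thesis by linarith
qed

lemma escape_bound:
  assumes p: "0 \<le> p" "p \<le> 1" and u: "is_opt g m u" and x: "x \<in> Lm m"
  shows "(\<Sum>y\<in>Lm m. if is_opt g m y then 0 else pmf (ea_step p g x) y) \<le> 1 - min p (1 - p) ^ m"
proof -
  have uL: "u \<in> Lm m" using u by (auto simp: is_opt_def Lm_def)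
  have "(\<Sum>y\<in>Lm m. if is_opt g m y then 0 else pmf (ea_step p g x) y)
     \<le> (\<Sum>y\<in>Lm m. pmf (ea_step p g x) y - (if y = u then pmf (ea_step p g x) y else 0))"
    using u by (intro sum_mono) auto
  also have "\<dots> = 1 - pmf (ea_step p g x) u"
    using uL K_sum[OF p x] by (simp add: sum_subtractf)
  finally show ?thesis using K_opt_lower[OF p u x] by linarith
qed

lemma Phi_contr:
  assumes p: "0 \<le> p" "p \<le> 1" and u: "is_opt g m u" and F: "\<forall>x\<in>Lm m. F x \<ge> 0"
  shows "(\<Sum>y\<in>Lm m. Phi p g m F y) \<le> (1 - min p (1 - p) ^ m) * (\<Sum>y\<in>Lm m. F y)"
proof -
  have "(\<Sum>y\<in>Lm m. Phi p g m F y) = (\<Sum>y\<in>Lm m. \<Sum>x\<in>Lm m. F x * (if is_opt g m y then 0 else pmf (ea_step p g x) y))"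
    by (auto simp: Phi_def intro!: sum.cong)
  also have "\<dots> = (\<Sum>x\<in>Lm m. F x * (\<Sum>y\<in>Lm m. if is_opt g m y then 0 else pmf (ea_step p g x) y))"
    unfolding sum_distrib_left by (rule sum.swap)
  also have "\<dots> \<le> (\<Sum>x\<in>Lm m. F x * (1 - min p (1 - p) ^ m))"
    using F escape_bound[OF p u] by (intro sum_mono mult_left_mono) auto
  finally show ?thesis by (simp add: sum_distrib_right mult.commute)
qed

lemma theta_bounds:
  fixes p :: real
  assumes "0 < p" "p < 1"
  shows "0 \<le> 1 - min p (1 - p) ^ m" "1 - min p (1 - p) ^ m < 1"
proof -
  have a: "0 < min p (1 - p)" using assms unfolding min_def by auto
  have b: "min p (1 - p) \<le> 1" using assms by (simp add: min_def)
  have "0 < min p (1 - p) ^ m" using a by simp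
  moreover have "min p (1 - p) ^ m \<le> 1" using a b by (intro power_le_one) auto
  ultimately
  show "0 \<le> 1 - min p (1 - p) ^ m" "1 - min p (1 - p) ^ m < 1" by auto
qed

lemma G1:
  assumes p: "0 < p" "p < 1" and u: "is_opt g m u" and S: "Sol p g m V"
    and Vnn: "\<forall>y\<in>Lm m. V y \<ge> 0"
  shows "ea_runtime p g m = ennreal (\<Sum>y\<in>Lm m. V y)"
proof -
  have p': "0 \<le> p" "p \<le> 1" using p by auto
  define \<theta> where "\<theta> = 1 - min p (1 - p) ^ m"
  have th: "0 \<le> \<theta>" "\<theta> < 1" using theta_bounds[OF p] by (auto simp: \<theta>_def)
  define U where "U t = (Phi p g m ^^ t) V" for t
  have Usuc: "U (Suc t) = Phi p g m (U t)" for t by (simp add: U_def)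
  have key: "\<forall>y\<in>Lm m. U t y = w p g m t y + U (Suc t) y" for t
  proof (induction t)
    case 0
    show ?case
    proof
      fix y assume y: "y \<in> Lm m"
      show "U 0 y = w p g m 0 y + U (Suc 0) y"
        using S y by (auto simp: Sol_def U_def w0 Phi_def)
    qed
  next
    case (Suc t)
    show ?case
    proof
      fix y assume y: "y \<in> Lm m"
      have "U (Suc t) y = Phi p g m (U t) y" by (simp add: Usuc)
      also have "\<dots> = Phi p g m (w p g m t) y + Phi p g m (U (Suc t)) y"
        using Suc by (intro Phi_add) auto
      also have "\<dots> = w p g m (Suc t) y + U (Suc (Suc t)) y"
        using y by (simp add: wSuc Usuc)
      finally show "U (Suc t) y = w p g m (Suc t) y + U (Suc (Suc t)) y" .
    qed
  qed
  have part: "\<forall>y\<in>Lm m. V y = (\<Sum>s<t. w p g m s y) + U t y" for t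
  proof (induction t)
    case 0
    then show ?case by (simp add: U_def)
  next
    case (Suc t)
    then show ?case using key[of t] by auto
  qed
  have Unn: "\<forall>y\<in>Lm m. U t y \<ge> 0" for t
  proof (induction t)
    case 0
    then show ?case using Vnn by (simp add: U_def)
  next
    case (Suc t)
    then show ?case by (simp add: Usuc Phi_nonneg)
  qed
  have Ub: "(\<Sum>y\<in>Lm m. U t y) \<le> \<theta> ^ t * (\<Sum>y\<in>Lm m. V y)" for t
  proof (induction t)
    case 0
    then show ?case by (simp add: U_def)
  next
    case (Suc t)
    have "(\<Sum>y\<in>Lm m. U (Suc t) y) \<le> \<theta> * (\<Sum>y\<in>Lm m. U t y)"
      unfolding Usuc \<theta>_def by (rule Phi_contr[OF p' u Unn])
    also have "\<dots> \<le> \<theta> * (\<theta> ^ t * (\<Sum>y\<in>Lm m. V y))"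
      using Suc th by (intro mult_left_mono) auto
    finally show ?case by (simp add: algebra_simps)
  qed
  define P where "P t = (\<Sum>y\<in>Lm m. w p g m t y)" for t
  have Pnn: "P t \<ge> 0" for t by (simp add: P_def w_def sum_nonneg)
  have psum: "(\<Sum>s<t. P s) = (\<Sum>y\<in>Lm m. V y) - (\<Sum>y\<in>Lm m. U t y)" for t
  proof -
    have "(\<Sum>y\<in>Lm m. V y) = (\<Sum>y\<in>Lm m. (\<Sum>s<t. w p g m s y) + U t y)"
      using part[of t] by (intro sum.cong) auto
    also have "\<dots> = (\<Sum>y\<in>Lm m. \<Sum>s<t. w p g m s y) + (\<Sum>y\<in>Lm m. U t y)"
      by (rule sum.distrib)
    also have "(\<Sum>y\<in>Lm m. \<Sum>s<t. w p g m s y) = (\<Sum>s<t. P s)"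
      unfolding P_def by (rule sum.swap)
    finally show ?thesis by simp
  qed
  have "(\<lambda>t. \<Sum>y\<in>Lm m. U t y) \<longlonglongrightarrow> 0"
  proof (rule tendsto_sandwich[of "\<lambda>_. 0" _ _ "\<lambda>t. \<theta> ^ t * (\<Sum>y\<in>Lm m. V y)"])
    show "\<forall>\<^sub>F t in sequentially. 0 \<le> (\<Sum>y\<in>Lm m. U t y)" using Unn by (auto intro!: always_eventually sum_nonneg)
    show "\<forall>\<^sub>F t in sequentially. (\<Sum>y\<in>Lm m. U t y) \<le> \<theta> ^ t * (\<Sum>y\<in>Lm m. V y)" using Ub by auto
    show "(\<lambda>_. 0) \<longlonglongrightarrow> (0::real)" by simp
    show "(\<lambda>t. \<theta> ^ t * (\<Sum>y\<in>Lm m. V y)) \<longlonglongrightarrow> 0"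
      using th by (intro tendsto_mult_left_zero LIMSEQ_power_zero) auto
  qed
  then have "(\<lambda>t. (\<Sum>y\<in>Lm m. V y) - (\<Sum>y\<in>Lm m. U t y)) \<longlonglongrightarrow> (\<Sum>y\<in>Lm m. V y) - 0"
    by (intro tendsto_diff tendsto_const)
  then have "P sums (\<Sum>y\<in>Lm m. V y)" by (simp add: sums_def psum)
  then have sm: "summable P" "suminf P = (\<Sum>y\<in>Lm m. V y)" by (auto simp: sums_iff)
  have "ea_runtime p g m = (\<Sum>t. ennreal (P t))"
    by (simp add: ea_runtime_def prob_eq P_def)
  also have "\<dots> = ennreal (suminf P)" using Pnn sm by (intro suminf_ennreal2) auto
  finally show ?thesis using sm by simp
qed

lemma G2:
  assumes p: "0 < p" "p < 1" and u: "is_opt g m u"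
  shows "\<exists>V. Sol p g m V \<and> (\<forall>y\<in>Lm m. V y \<ge> 0)"
proof -
  have p': "0 \<le> p" "p \<le> 1" using p by auto
  define \<theta> where "\<theta> = 1 - min p (1 - p) ^ m"
  have th: "0 \<le> \<theta>" "\<theta> < 1" using theta_bounds[OF p] by (auto simp: \<theta>_def)
  have wnn: "\<forall>y\<in>Lm m. w p g m t y \<ge> 0" for t by (simp add: w_def)
  have Pb: "(\<Sum>y\<in>Lm m. w p g m t y) \<le> \<theta> ^ t" for t
  proof (induction t)
    case 0
    have "(\<Sum>y\<in>Lm m. w p g m 0 y) = measure_pmf.prob (ea_chain p g m 0) {s. \<not> snd s}" by (rule prob_eq[symmetric])
    also have "\<dots> \<le> 1" by simp
    finally show ?case by simp
  next
    case (Suc t)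
    have "(\<Sum>y\<in>Lm m. w p g m (Suc t) y) = (\<Sum>y\<in>Lm m. Phi p g m (w p g m t) y)"
      by (intro sum.cong) (auto simp: wSuc)
    also have "\<dots> \<le> \<theta> * (\<Sum>y\<in>Lm m. w p g m t y)"
      unfolding \<theta>_def by (rule Phi_contr[OF p' u wnn])
    also have "\<dots> \<le> \<theta> * \<theta> ^ t" using Suc th by (intro mult_left_mono) auto
    finally show ?case by simp
  qed
  have wle: "w p g m t y \<le> \<theta> ^ t" if "y \<in> Lm m" for t y
  proof -
    have "w p g m t y \<le> (\<Sum>y\<in>Lm m. w p g m t y)"
      using that wnn by (intro member_le_sum) auto
    then show ?thesis using Pb[of t] by linarith
  qed
  have summ: "summable (\<lambda>t. w p g m t y)" if "y \<in> Lm m" for y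
  proof (rule summable_comparison_test'[of "\<lambda>t. \<theta> ^ t" 0])
    show "summable (\<lambda>t. \<theta> ^ t)" using th by (intro summable_geometric) auto
    show "norm (w p g m t y) \<le> \<theta> ^ t" if "0 \<le> t" for t using wle[OF \<open>y \<in> Lm m\<close>] by (simp add: w_def)
  qed
  define V where "V y = (\<Sum>t. w p g m t y)" for y
  have "Sol p g m V"
    unfolding Sol_def
  proof
    fix y assume y: "y \<in> Lm m"
    have "V y = w p g m 0 y + (\<Sum>t. w p g m (Suc t) y)"
      using suminf_split_head[OF summ[OF y]] by (simp add: V_def)
    also have "(\<Sum>t. w p g m (Suc t) y) = (\<Sum>t. Phi p g m (w p g m t) y)"
      using y by (simp add: wSuc)
    also have "\<dots> = (if is_opt g m y then 0 else (\<Sum>x\<in>Lm m. V x * pmf (ea_step p g x) y))"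
    proof (cases "is_opt g m y")
      case True
      then show ?thesis by (simp add: Phi_def)
    next
      case False
      have "(\<Sum>t. Phi p g m (w p g m t) y) = (\<Sum>t. \<Sum>x\<in>Lm m. w p g m t x * pmf (ea_step p g x) y)"
        using False by (simp add: Phi_def)
      also have "\<dots> = (\<Sum>x\<in>Lm m. \<Sum>t. w p g m t x * pmf (ea_step p g x) y)"
        using summ by (intro suminf_sum summable_mult2) auto
      also have "\<dots> = (\<Sum>x\<in>Lm m. V x * pmf (ea_step p g x) y)"
        unfolding V_def using summ by (intro sum.cong refl suminf_mult2[symmetric]) auto
      finally show ?thesis using False by simp
    qed
    finally show "V y = (if is_opt g m y then 0 else 1 / 2 ^ m + (\<Sum>x\<in>Lm m. V x * pmf (ea_step p g x) y))"
      using y by (simp add: w0)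
  qed
  moreover have "\<forall>y\<in>Lm m. V y \<ge> 0"
    using summ by (auto simp: V_def w_def intro!: suminf_nonneg)
  ultimately show ?thesis by blast
qed


definition uopt :: "(bool list \<Rightarrow> real) \<Rightarrow> nat \<Rightarrow> bool list \<Rightarrow> bool" where
  "uopt g m u \<longleftrightarrow> length u = m \<and> (\<forall>y\<in>Lm m. y \<noteq> u \<longrightarrow> g y < g u)"

lemma uopt_is_opt: "uopt g m u \<Longrightarrow> is_opt g m u"
  unfolding uopt_def is_opt_def Lm_def by force

lemma is_opt_iff: "uopt g m u \<Longrightarrow> y \<in> Lm m \<Longrightarrow> is_opt g m y \<longleftrightarrow> y = u"
  unfolding uopt_def is_opt_def Lm_def by force

lemma uopt_Lm: "uopt g m u \<Longrightarrow> u \<in> Lm m" by (simp add: uopt_def Lm_def)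

lemma sum_if_pt:
  fixes h :: "'a \<Rightarrow> real"
  assumes "finite A" "e \<in> A"
  shows "(\<Sum>a\<in>A. if a = e then X else h a) = X - h e + (\<Sum>a\<in>A. h a)"
proof -
  have "(\<Sum>a\<in>A. if a = e then X else h a) = (\<Sum>a\<in>A. h a + (if a = e then X - h e else 0))"
    by (intro sum.cong) auto
  also have "\<dots> = (\<Sum>a\<in>A. h a) + (X - h e)" using assms by (simp add: sum.distrib)
  finally show ?thesis by simp
qed

lemma flow:
  assumes p: "0 \<le> p" "p \<le> 1" and S: "Sol p g m V" and U: "uopt g m u"
  shows "(\<Sum>x\<in>Lm m. V x * pmf (ea_step p g x) u) = 1 - 1 / 2 ^ m"
proof -
  have uL: "u \<in> Lm m" using U by (rule uopt_Lm)
  define A where "A y = 1 / 2 ^ m + (\<Sum>x\<in>Lm m. V x * pmf (ea_step p g x) y)" for y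
  have "(\<Sum>y\<in>Lm m. V y) = (\<Sum>y\<in>Lm m. if y = u then 0 else A y)"
    using S is_opt_iff[OF U] by (intro sum.cong) (auto simp: Sol_def A_def)
  also have "\<dots> = 0 - A u + (\<Sum>y\<in>Lm m. A y)" by (rule sum_if_pt[OF Lm_finite uL])
  also have "(\<Sum>y\<in>Lm m. A y) = (\<Sum>y\<in>Lm m. 1 / 2 ^ m) + (\<Sum>y\<in>Lm m. \<Sum>x\<in>Lm m. V x * pmf (ea_step p g x) y)"
    by (simp add: A_def sum.distrib)
  also have "(\<Sum>y\<in>Lm m. 1 / 2 ^ m) = (1::real)" by (simp add: Lm_card)
  also have "(\<Sum>y\<in>Lm m. \<Sum>x\<in>Lm m. V x * pmf (ea_step p g x) y) = (\<Sum>x\<in>Lm m. V x * (\<Sum>y\<in>Lm m. pmf (ea_step p g x) y))"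
    unfolding sum_distrib_left by (rule sum.swap)
  also have "\<dots> = (\<Sum>x\<in>Lm m. V x)" using K_sum[OF p] by simp
  finally show ?thesis by (simp add: A_def)
qed

lemma Lm_append_image: "Lm (k + L) = (\<lambda>(a, r). a @ r) ` (Lm k \<times> Lm L)"
proof
  show "Lm (k + L) \<subseteq> (\<lambda>(a, r). a @ r) ` (Lm k \<times> Lm L)"
  proof
    fix x assume "x \<in> Lm (k + L)"
    then have "x = (\<lambda>(a, r). a @ r) (take k x, drop k x)" "(take k x, drop k x) \<in> Lm k \<times> Lm L"
      by (auto simp: Lm_def)
    then show "x \<in> (\<lambda>(a, r). a @ r) ` (Lm k \<times> Lm L)" by blast
  qed
qed (auto simp: Lm_def)

lemma sum_split: "(\<Sum>x\<in>Lm (k + L). h x) = (\<Sum>a\<in>Lm k. \<Sum>r\<in>Lm L. h (a @ r))"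
proof -
  have inj: "inj_on (\<lambda>(a, r). a @ r) (Lm k \<times> Lm L)"
    by (auto simp: inj_on_def Lm_def)
  have "(\<Sum>x\<in>Lm (k + L). h x) = (\<Sum>z\<in>Lm k \<times> Lm L. h ((\<lambda>(a, r). a @ r) z))"
    unfolding Lm_append_image by (rule sum.reindex[OF inj, unfolded comp_def])
  also have "\<dots> = (\<Sum>a\<in>Lm k. \<Sum>r\<in>Lm L. h (a @ r))"
    by (simp add: sum.cartesian_product split_beta)
  finally show ?thesis .
qed

lemma Fprops:
  assumes fnn: "\<forall>a\<in>Lm k. f a \<ge> 0" and fu: "uopt f k (replicate k True)"
    and Gnn: "\<forall>r\<in>Lm L. G r \<ge> 0" and Gu: "uopt G L (replicate L True)"
    and Fdef: "\<forall>a\<in>Lm k. \<forall>r\<in>Lm L. F (a @ r) = f a + (if a = replicate k True then G r else 0)"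
  shows "(\<forall>y\<in>Lm (k + L). F y \<ge> 0) \<and> uopt F (k + L) (replicate (k + L) True)"
proof -
  have e1: "replicate k True \<in> Lm k" and e2: "replicate L True \<in> Lm L" by (auto simp: Lm_def)
  have split: "\<exists>a r. y = a @ r \<and> a \<in> Lm k \<and> r \<in> Lm L" if "y \<in> Lm (k + L)" for y
    using that unfolding Lm_append_image by auto
  have nn: "\<forall>y\<in>Lm (k + L). F y \<ge> 0"
  proof
    fix y assume "y \<in> Lm (k + L)"
    then obtain a r where y: "y = a @ r" "a \<in> Lm k" "r \<in> Lm L" using split by blast
    show "F y \<ge> 0" using Fdef fnn Gnn y by auto
  qed
  have Fopt: "F (replicate k True @ replicate L True) = f (replicate k True) + G (replicate L True)"
    using Fdef e1 e2 by auto
  have "uopt F (k + L) (replicate k True @ replicate L True)"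
    unfolding uopt_def
  proof (intro conjI ballI impI)
    show "length (replicate k True @ replicate L True) = k + L" by simp
    fix y assume yL: "y \<in> Lm (k + L)" and yne: "y \<noteq> replicate k True @ replicate L True"
    then obtain a r where y: "y = a @ r" "a \<in> Lm k" "r \<in> Lm L" using split by blast
    show "F y < F (replicate k True @ replicate L True)"
    proof (cases "a = replicate k True")
      case True
      then have "r \<noteq> replicate L True" using yne y by auto
      then have "G r < G (replicate L True)" using Gu y by (auto simp: uopt_def)
      then show ?thesis using Fdef y True Fopt by auto
    next
      case False
      then have "f a < f (replicate k True)" using fu y by (auto simp: uopt_def)
      moreover have "G (replicate L True) \<ge> 0" using Gnn e2 by auto
      ultimately show ?thesis using Fdef y False Fopt by auto
    qed
  qed
  then show ?thesis using nn by (simp add: replicate_add)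
qed


lemma Fstep:
  fixes p :: real and f G F Vf VG :: "bool list \<Rightarrow> real" and k L :: nat
  assumes p: "0 < p" "p < 1"
    and fu: "uopt f k (replicate k True)"
    and Gnn: "\<forall>r\<in>Lm L. G r \<ge> 0" and Gu: "uopt G L (replicate L True)"
    and Fdef: "\<forall>a\<in>Lm k. \<forall>r\<in>Lm L. F (a @ r) = f a + (if a = replicate k True then G r else 0)"
    and Fu: "uopt F (k + L) (replicate (k + L) True)"
    and Sf: "Sol p f k Vf" and Vfnn: "\<forall>a\<in>Lm k. Vf a \<ge> 0"
    and SG: "Sol p G L VG" and VGnn: "\<forall>r\<in>Lm L. VG r \<ge> 0"
  shows "\<exists>V. Sol p F (k + L) V \<and> (\<forall>y\<in>Lm (k + L). V y \<ge> 0) \<and>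
           (\<Sum>y\<in>Lm (k + L). V y) = (\<Sum>a\<in>Lm k. Vf a) + (\<Sum>r\<in>Lm L. VG r) / (1 - p) ^ k"
proof -
  have p': "0 \<le> p" "p \<le> 1" using p by auto
  define e1 where "e1 = replicate k True"
  define e2 where "e2 = replicate L True"
  define q where "q = (1 - p) ^ k"
  have q: "q > 0" using p by (simp add: q_def)
  have e1L: "e1 \<in> Lm k" and e2L: "e2 \<in> Lm L" by (auto simp: Lm_def e1_def e2_def)
  have e12: "replicate (k + L) True = e1 @ e2" by (simp add: e1_def e2_def replicate_add)
  have fu': "uopt f k e1" and Gu': "uopt G L e2" and Fu': "uopt F (k + L) (e1 @ e2)"
    using fu Gu Fu e12 by (auto simp: e1_def e2_def)
  have flt: "f a < f e1" if "a \<in> Lm k" "a \<noteq> e1" for a using fu' that by (auto simp: uopt_def)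
  have Glt: "G r < G e2" if "r \<in> Lm L" "r \<noteq> e2" for r using Gu' that by (auto simp: uopt_def)
  have Fapp: "F (a @ r) = f a + (if a = e1 then G r else 0)" if "a \<in> Lm k" "r \<in> Lm L" for a r
    using Fdef that by (auto simp: e1_def)
  have Vf1: "Vf e1 = 0" using Sf e1L is_opt_iff[OF fu' e1L] by (auto simp: Sol_def)
  have VG2: "VG e2 = 0" using SG e2L is_opt_iff[OF Gu' e2L] by (auto simp: Sol_def)
  have lenk: "length a = k" if "a \<in> Lm k" for a using that by (simp add: Lm_def)
  have lenL: "length r = L" if "r \<in> Lm L" for r using that by (simp add: Lm_def)
  have appL: "a @ r \<in> Lm (k + L)" if "a \<in> Lm k" "r \<in> Lm L" for a r using that by (simp add: Lm_def)
  have mmapp: "mm p (a @ r) (a' @ r') = mm p a a' * mm p r r'" if "a \<in> Lm k" "a' \<in> Lm k" for a a' r r'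
    using that by (intro mm_append) (simp add: Lm_def)
  have sum_r1: "(\<Sum>r\<in>Lm L. mm p r r') = 1" if "r' \<in> Lm L" for r'
    using that by (intro mm_sum'[OF p']) (simp add: Lm_def)
  have sum_r2: "(\<Sum>s\<in>Lm L. mm p r' s) = 1" if "r' \<in> Lm L" for r'
    using that by (intro mm_sum[OF p']) (simp add: Lm_def)
  have sum_c: "(\<Sum>c\<in>Lm k. mm p e1 c) = 1"
    using e1L by (intro mm_sum[OF p']) (simp add: Lm_def)
  have mm11: "mm p e1 e1 = q" by (simp add: e1_def q_def mm_one)
  have Gnn2: "G e2 \<ge> 0" using Gnn e2L by auto
  have flowf: "(\<Sum>a\<in>Lm k. Vf a * mm p a e1) = 1 - 1 / 2 ^ k"
  proof -
    have "(\<Sum>a\<in>Lm k. Vf a * mm p a e1) = (\<Sum>a\<in>Lm k. Vf a * pmf (ea_step p f a) e1)"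
    proof (intro sum.cong refl)
      fix a assume a: "a \<in> Lm k"
      show "Vf a * mm p a e1 = Vf a * pmf (ea_step p f a) e1"
      proof (cases "a = e1")
        case True
        then show ?thesis using Vf1 by simp
      next
        case False
        then show ?thesis using K_expand[OF p', of a k e1 f] flt[OF a False] a e1L by (auto simp: Lm_def)
      qed
    qed
    also have "\<dots> = 1 - 1 / 2 ^ k" by (rule flow[OF p' Sf fu'])
    finally show ?thesis .
  qed
  define V where "V x = (if take k x = e1 then VG (drop k x) / q else Vf (take k x) / 2 ^ L)" for x
  have Vapp: "V (a @ r) = (if a = e1 then VG r / q else Vf a / 2 ^ L)" if "a \<in> Lm k" for a r
    using that e1L by (auto simp: V_def Lm_def)
  have Sol_at: "V (a' @ r') = (if is_opt F (k + L) (a' @ r') then 0 else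
        1 / 2 ^ (k + L) + (\<Sum>x\<in>Lm (k + L). V x * pmf (ea_step p F x) (a' @ r')))"
    if a': "a' \<in> Lm k" and r': "r' \<in> Lm L" for a' r'
  proof -
    let ?y = "a' @ r'"
    have yL: "?y \<in> Lm (k + L)" using a' r' by (rule appL)
    have acc: "(\<Sum>x\<in>Lm (k + L). V x * pmf (ea_step p F x) ?y)
      = (\<Sum>a\<in>Lm k. \<Sum>r\<in>Lm L. V (a @ r) * (if F (a @ r) \<le> F ?y then mm p a a' * mm p r r' else 0)) + V ?y * rho p F (k + L) ?y"
    proof -
      have "(\<Sum>x\<in>Lm (k + L). V x * pmf (ea_step p F x) ?y) = (\<Sum>x\<in>Lm (k + L). V x * (if F x \<le> F ?y then mm p x ?y else 0)) + V ?y * rho p F (k + L) ?y"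
        by (rule sumK[OF p' yL])
      also have "(\<Sum>x\<in>Lm (k + L). V x * (if F x \<le> F ?y then mm p x ?y else 0)) = (\<Sum>a\<in>Lm k. \<Sum>r\<in>Lm L. V (a @ r) * (if F (a @ r) \<le> F ?y then mm p (a @ r) ?y else 0))"
        by (rule sum_split)
      also have "\<dots> = (\<Sum>a\<in>Lm k. \<Sum>r\<in>Lm L. V (a @ r) * (if F (a @ r) \<le> F ?y then mm p a a' * mm p r r' else 0))"
        by (intro sum.cong refl) (simp add: mmapp a')
      finally show ?thesis .
    qed
    have rhoF: "rho p F (k + L) ?y = (\<Sum>c\<in>Lm k. \<Sum>s\<in>Lm L. if F (c @ s) < F ?y then mm p a' c * mm p r' s else 0)"
      apply (simp add: rho_def sum.inter_filter sum_split)
      apply (intro sum.cong refl)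
      apply (simp add: mmapp a')
      done
    show ?thesis
    proof (cases "a' = e1")
      case False
      have nopt: "\<not> is_opt F (k + L) ?y" using is_opt_iff[OF Fu' yL] False a' e1L by (auto simp: Lm_def append_eq_append_conv)
      have Fy: "F ?y = f a'" using Fapp[OF a' r'] False by simp
      have fa'e1: "f a' < f e1" using flt[OF a' False] .
      have hA1: "(\<Sum>r\<in>Lm L. V (a @ r) * (if F (a @ r) \<le> F ?y then mm p a a' * mm p r r' else 0))
                 = Vf a * (if f a \<le> f a' then mm p a a' else 0) / 2 ^ L" if a: "a \<in> Lm k" for a
      proof (cases "a = e1")
        case True
        have "F (a @ r) > F ?y" if "r \<in> Lm L" for r
          using Fapp[OF a that] True Fy fa'e1 Gnn that by force
        then have z: "\<not> F (a @ r) \<le> F ?y" if "r \<in> Lm L" for r using that by (simp add: not_le)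
        have "(\<Sum>r\<in>Lm L. V (a @ r) * (if F (a @ r) \<le> F ?y then mm p a a' * mm p r r' else 0)) = 0"
          by (rule sum.neutral) (simp add: z)
        then show ?thesis using True Vf1 by simp
      next
        case af: False
        have "(\<Sum>r\<in>Lm L. V (a @ r) * (if F (a @ r) \<le> F ?y then mm p a a' * mm p r r' else 0))
            = (\<Sum>r\<in>Lm L. (Vf a * (if f a \<le> f a' then mm p a a' else 0) / 2 ^ L) * mm p r r')"
          by (intro sum.cong refl) (simp add: Vapp[OF a] Fapp[OF a] af Fy)
        also have "\<dots> = Vf a * (if f a \<le> f a' then mm p a a' else 0) / 2 ^ L"
          unfolding sum_distrib_left[symmetric] sum_r1[OF r'] by simp
        finally show ?thesis .
      qed
      have hA2: "(\<Sum>s\<in>Lm L. if F (c @ s) < F ?y then mm p a' c * mm p r' s else 0)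
                 = (if f c < f a' then mm p a' c else 0)" if c: "c \<in> Lm k" for c
      proof (cases "c = e1")
        case True
        have "\<not> F (c @ s) < F ?y" if "s \<in> Lm L" for s
          using Fapp[OF c that] True Fy fa'e1 Gnn that by force
        then have "(\<Sum>s\<in>Lm L. if F (c @ s) < F ?y then mm p a' c * mm p r' s else 0) = 0"
          by (intro sum.neutral) simp
        then show ?thesis using True fa'e1 by simp
      next
        case cf: False
        have "(\<Sum>s\<in>Lm L. if F (c @ s) < F ?y then mm p a' c * mm p r' s else 0)
            = (\<Sum>s\<in>Lm L. (if f c < f a' then mm p a' c else 0) * mm p r' s)"
          by (intro sum.cong refl) (simp add: Fapp[OF c] cf Fy)
        also have "\<dots> = (if f c < f a' then mm p a' c else 0)"
          unfolding sum_distrib_left[symmetric] sum_r2[OF r'] by simp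
        finally show ?thesis .
      qed
      have rho': "rho p F (k + L) ?y = rho p f k a'"
      proof -
        have "rho p F (k + L) ?y = (\<Sum>c\<in>Lm k. if f c < f a' then mm p a' c else 0)"
          unfolding rhoF by (intro sum.cong refl) (rule hA2)
        also have "\<dots> = rho p f k a'" by (simp add: rho_def sum.inter_filter)
        finally show ?thesis .
      qed
      have acc': "(\<Sum>x\<in>Lm (k + L). V x * pmf (ea_step p F x) ?y)
          = (\<Sum>a\<in>Lm k. Vf a * (if f a \<le> f a' then mm p a a' else 0)) / 2 ^ L + Vf a' / 2 ^ L * rho p f k a'"
        by (simp add: acc hA1 rho' Vapp[OF a'] False sum_divide_distrib cong: sum.cong)
      have Sfa: "Vf a' = 1 / 2 ^ k + (\<Sum>a\<in>Lm k. Vf a * (if f a \<le> f a' then mm p a a' else 0)) + Vf a' * rho p f k a'"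
      proof -
        have "Vf a' = (if is_opt f k a' then 0 else 1 / 2 ^ k + (\<Sum>x\<in>Lm k. Vf x * pmf (ea_step p f x) a'))"
          using Sf a' unfolding Sol_def by blast
        then show ?thesis using is_opt_iff[OF fu' a'] False by (simp add: sumK[OF p' a'] add.assoc)
      qed
      define S where "S = (\<Sum>a\<in>Lm k. Vf a * (if f a \<le> f a' then mm p a a' else 0))"
      have "Vf a' / 2 ^ L = (1 / 2 ^ k + S + Vf a' * rho p f k a') / 2 ^ L"
        using arg_cong[OF Sfa, of "\<lambda>z. z / 2 ^ L"] by (simp add: S_def)
      also have "\<dots> = 1 / 2 ^ (k + L) + (S / 2 ^ L + Vf a' / 2 ^ L * rho p f k a')"
        by (simp add: power_add add_divide_distrib)
      finally have eq: "Vf a' / 2 ^ L = 1 / 2 ^ (k + L) + (S / 2 ^ L + Vf a' / 2 ^ L * rho p f k a')" .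
      have Vy: "V ?y = Vf a' / 2 ^ L" by (simp add: Vapp[OF a'] False)
      have acc'': "(\<Sum>x\<in>Lm (k + L). V x * pmf (ea_step p F x) ?y) = S / 2 ^ L + Vf a' / 2 ^ L * rho p f k a'"
        using acc' by (simp add: S_def)
      show ?thesis
        unfolding Vy acc'' if_not_P[OF nopt] by (rule eq)
    next
      case True
      note a'e = True
      show ?thesis
      proof (cases "r' = e2")
        case True
        then show ?thesis using is_opt_iff[OF Fu' yL] a'e by (simp add: Vapp[OF e1L] VG2)
      next
        case False
        have nopt: "\<not> is_opt F (k + L) ?y" using is_opt_iff[OF Fu' yL] False a'e by auto
        have Fy: "F ?y = f e1 + G r'" using Fapp[OF a' r'] a'e by simp
        have Gr': "G r' \<ge> 0" using Gnn r' by auto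
        have Fy': "F (e1 @ r') = f e1 + G r'" using Fy a'e by simp
        define X where "X = (\<Sum>r\<in>Lm L. VG r * (if G r \<le> G r' then mm p r r' else 0))"
        have hB1: "(\<Sum>r\<in>Lm L. V (a @ r) * (if F (a @ r) \<le> F ?y then mm p a a' * mm p r r' else 0))
                 = (if a = e1 then X else Vf a * mm p a e1 / 2 ^ L)" if a: "a \<in> Lm k" for a
        proof (cases "a = e1")
          case True
          have "(\<Sum>r\<in>Lm L. V (a @ r) * (if F (a @ r) \<le> F ?y then mm p a a' * mm p r r' else 0))
              = (\<Sum>r\<in>Lm L. VG r * (if G r \<le> G r' then mm p r r' else 0))"
            using q e1L r' by (intro sum.cong refl) (simp add: Vapp[OF e1L] Fapp[OF e1L] True a'e mm11)
          then show ?thesis using True by (simp add: X_def)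
        next
          case af: False
          have "(\<Sum>r\<in>Lm L. V (a @ r) * (if F (a @ r) \<le> F ?y then mm p a a' * mm p r r' else 0))
              = (\<Sum>r\<in>Lm L. (Vf a * mm p a e1 / 2 ^ L) * mm p r r')"
            using flt[OF a af] Gr' by (intro sum.cong refl) (simp add: Vapp[OF a] Fapp[OF a] af a'e Fy')
          also have "\<dots> = Vf a * mm p a e1 / 2 ^ L"
            unfolding sum_distrib_left[symmetric] sum_r1[OF r'] by simp
          finally show ?thesis using af by simp
        qed
        have hB2: "(\<Sum>s\<in>Lm L. if F (c @ s) < F ?y then mm p a' c * mm p r' s else 0)
                 = (if c = e1 then q * rho p G L r' else mm p e1 c)" if c: "c \<in> Lm k" for c
        proof (cases "c = e1")
          case True
          have "(\<Sum>s\<in>Lm L. if F (c @ s) < F ?y then mm p a' c * mm p r' s else 0)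
              = (\<Sum>s\<in>Lm L. q * (if G s < G r' then mm p r' s else 0))"
            using e1L r' by (intro sum.cong refl) (simp add: Fapp[OF e1L] True a'e mm11)
          then show ?thesis using True unfolding sum_distrib_left[symmetric] by (simp add: rho_def sum.inter_filter)
        next
          case cf: False
          have "(\<Sum>s\<in>Lm L. if F (c @ s) < F ?y then mm p a' c * mm p r' s else 0)
              = (\<Sum>s\<in>Lm L. mm p e1 c * mm p r' s)"
            using flt[OF c cf] Gr' by (intro sum.cong refl) (simp add: Fapp[OF c] cf a'e Fy')
          also have "\<dots> = mm p e1 c"
            unfolding sum_distrib_left[symmetric] sum_r2[OF r'] by simp
          finally show ?thesis using cf by simp
        qed
        have rho': "rho p F (k + L) ?y = q * rho p G L r' + 1 - q"
        proof -
          have "rho p F (k + L) ?y = (\<Sum>c\<in>Lm k. if c = e1 then q * rho p G L r' else mm p e1 c)"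
            by (simp add: rhoF hB2 cong: sum.cong)
          also have "\<dots> = q * rho p G L r' - mm p e1 e1 + (\<Sum>c\<in>Lm k. mm p e1 c)"
            by (rule sum_if_pt[OF Lm_finite e1L])
          finally show ?thesis by (simp add: sum_c mm11)
        qed
        have accsum: "(\<Sum>a\<in>Lm k. if a = e1 then X else Vf a * mm p a e1 / 2 ^ L) = X + (1 - 1 / 2 ^ k) / 2 ^ L"
        proof -
          have "(\<Sum>a\<in>Lm k. if a = e1 then X else Vf a * mm p a e1 / 2 ^ L)
              = X - Vf e1 * mm p e1 e1 / 2 ^ L + (\<Sum>a\<in>Lm k. Vf a * mm p a e1 / 2 ^ L)"
            by (rule sum_if_pt[OF Lm_finite e1L])
          also have "\<dots> = X + (\<Sum>a\<in>Lm k. Vf a * mm p a e1) / 2 ^ L"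
            by (simp add: Vf1 sum_divide_distrib)
          finally show ?thesis by (simp add: flowf)
        qed
        have acc': "(\<Sum>x\<in>Lm (k + L). V x * pmf (ea_step p F x) ?y)
            = X + (1 - 1 / 2 ^ k) / 2 ^ L + VG r' / q * (q * rho p G L r' + 1 - q)"
        proof -
          have Vy: "V ?y = VG r' / q" using Vapp[OF a', of r'] a'e by simp
          have "(\<Sum>a\<in>Lm k. \<Sum>r\<in>Lm L. V (a @ r) * (if F (a @ r) \<le> F ?y then mm p a a' * mm p r r' else 0))
              = (\<Sum>a\<in>Lm k. if a = e1 then X else Vf a * mm p a e1 / 2 ^ L)"
            by (intro sum.cong refl) (rule hB1)
          then show ?thesis unfolding acc Vy rho' accsum by simp
        qed
        have SGr: "VG r' = 1 / 2 ^ L + X + VG r' * rho p G L r'"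
        proof -
          have "VG r' = (if is_opt G L r' then 0 else 1 / 2 ^ L + (\<Sum>x\<in>Lm L. VG x * pmf (ea_step p G x) r'))"
            using SG r' unfolding Sol_def by blast
          then show ?thesis using is_opt_iff[OF Gu' r'] False by (simp add: sumK[OF p' r'] X_def add.assoc)
        qed
        have eqB: "VG r' / q = 1 / 2 ^ (k + L) + (X + (1 - 1 / 2 ^ k) / 2 ^ L + VG r' / q * (q * rho p G L r' + 1 - q))"
        proof -
          have "VG r' / q * (q * rho p G L r' + 1 - q) = VG r' * rho p G L r' + VG r' / q - VG r'"
            using q by (simp add: field_simps)
          moreover have "(1::real) / 2 ^ (k + L) + (1 - 1 / 2 ^ k) / 2 ^ L = 1 / 2 ^ L"
            by (simp add: power_add field_simps)
          ultimately show ?thesis using SGr by linarith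
        qed
        have Vy2: "V ?y = VG r' / q" using Vapp[OF a', of r'] a'e by simp
        show ?thesis unfolding Vy2 acc' if_not_P[OF nopt] by (rule eqB)
      qed
    qed
  qed
  have SolV: "Sol p F (k + L) V"
    unfolding Sol_def
  proof
    fix y assume "y \<in> Lm (k + L)"
    then obtain a' r' where y: "y = a' @ r'" "a' \<in> Lm k" "r' \<in> Lm L"
      unfolding Lm_append_image by auto
    show "V y = (if is_opt F (k + L) y then 0 else 1 / 2 ^ (k + L) + (\<Sum>x\<in>Lm (k + L). V x * pmf (ea_step p F x) y))"
      using Sol_at[OF y(2,3)] y(1) by simp
  qed
  have Vnn: "\<forall>y\<in>Lm (k + L). V y \<ge> 0"
  proof
    fix y assume "y \<in> Lm (k + L)"
    then have "take k y \<in> Lm k" "drop k y \<in> Lm L" by (auto simp: Lm_def)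
    then show "V y \<ge> 0" using Vfnn VGnn q by (auto simp: V_def)
  qed
  have "(\<Sum>y\<in>Lm (k + L). V y) = (\<Sum>a\<in>Lm k. \<Sum>r\<in>Lm L. V (a @ r))" by (rule sum_split)
  also have "\<dots> = (\<Sum>a\<in>Lm k. if a = e1 then (\<Sum>r\<in>Lm L. VG r) / q else Vf a)"
  proof (intro sum.cong refl)
    fix a assume a: "a \<in> Lm k"
    show "(\<Sum>r\<in>Lm L. V (a @ r)) = (if a = e1 then (\<Sum>r\<in>Lm L. VG r) / q else Vf a)"
      by (simp add: Vapp[OF a] sum_divide_distrib Lm_card)
  qed
  also have "\<dots> = (\<Sum>r\<in>Lm L. VG r) / q - Vf e1 + (\<Sum>a\<in>Lm k. Vf a)"
    by (rule sum_if_pt[OF Lm_finite e1L])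
  finally have "(\<Sum>y\<in>Lm (k + L). V y) = (\<Sum>a\<in>Lm k. Vf a) + (\<Sum>r\<in>Lm L. VG r) / (1 - p) ^ k"
    by (simp add: Vf1 q_def)
  then show ?thesis using SolV Vnn by blast
qed


lemma prod_split_add:
  fixes h :: "nat \<Rightarrow> real"
  shows "(\<Prod>j<k + M. h j) = (\<Prod>j<k. h j) * (\<Prod>j<M. h (k + j))"
  by (induction M) (simp_all add: mult.assoc)

lemma prod_ind:
  assumes "length a = k"
  shows "(\<Prod>j<k. if a ! j then (1::real) else 0) = (if a = replicate k True then 1 else 0)"
proof (cases "a = replicate k True")
  case True
  then show ?thesis by simp
next
  case False
  have "\<exists>j<k. \<not> a ! j"
  proof (rule ccontr)
    assume "\<not> (\<exists>j<k. \<not> a ! j)"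
    then have "a = replicate k True" using assms by (intro replicate_eqI) (auto simp: in_set_conv_nth)
    then show False using False by simp
  qed
  then obtain j where "j < k" "\<not> a ! j" by blast
  then have "(\<Prod>j<k. if a ! j then (1::real) else 0) = 0" by (intro prod_zero) auto
  then show ?thesis using False by simp
qed

lemma LO_split:
  assumes k: "k > 0" and a: "length a = k" and r: "length r = N * k"
  shows "LO_k f (Suc N * k) k (a @ r) = f k a + (if a = replicate k True then LO_k f (N * k) k r else 0)"
proof -
  have d1: "Suc N * k div k = Suc N" and d2: "N * k div k = N" using k by simp_all
  define T where "T i = f k (take k (drop (i * k) (a @ r))) * (\<Prod>j<i * k. if (a @ r) ! j then (1::real) else 0)" for i
  have "LO_k f (Suc N * k) k (a @ r) = (\<Sum>i<Suc N. T i)" unfolding LO_k_def d1 T_def ..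
  also have "\<dots> = T 0 + (\<Sum>i<N. T (Suc i))" by (rule sum.lessThan_Suc_shift)
  also have "T 0 = f k a" using a by (simp add: T_def)
  also have "(\<Sum>i<N. T (Suc i)) = (\<Sum>i<N. (if a = replicate k True then 1 else 0) *
              (f k (take k (drop (i * k) r)) * (\<Prod>j<i * k. if r ! j then (1::real) else 0)))"
  proof (intro sum.cong refl)
    fix i
    have dr: "drop (Suc i * k) (a @ r) = drop (i * k) r" using a by simp
    have "(\<Prod>j<Suc i * k. if (a @ r) ! j then (1::real) else 0)
        = (\<Prod>j<k. if (a @ r) ! j then (1::real) else 0) * (\<Prod>j<i * k. if (a @ r) ! (k + j) then (1::real) else 0)"
      by (simp add: prod_split_add)
    also have "(\<Prod>j<k. if (a @ r) ! j then (1::real) else 0) = (\<Prod>j<k. if a ! j then (1::real) else 0)"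
      using a by (intro prod.cong refl) (simp add: nth_append)
    also have "\<dots> = (if a = replicate k True then 1 else 0)" by (rule prod_ind[OF a])
    also have "(\<Prod>j<i * k. if (a @ r) ! (k + j) then (1::real) else 0) = (\<Prod>j<i * k. if r ! j then (1::real) else 0)"
      using a by (intro prod.cong refl) (simp add: nth_append)
    finally show "T (Suc i) = (if a = replicate k True then 1 else 0) *
              (f k (take k (drop (i * k) r)) * (\<Prod>j<i * k. if r ! j then (1::real) else 0))"
      unfolding T_def dr by simp
  qed
  also have "\<dots> = (if a = replicate k True then LO_k f (N * k) k r else 0)"
    unfolding LO_k_def d2 by (simp add: sum_distrib_left[symmetric])
  finally show ?thesis .
qed

lemma geo_shift:
  fixes x :: real
  shows "(\<Sum>i<Suc N. x ^ i) = 1 + x * (\<Sum>i<N. x ^ i)"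
  by (simp only: sum.lessThan_Suc_shift power_Suc sum_distrib_left power_0)

lemma LO_main:
  fixes f :: "nat \<Rightarrow> bool list \<Rightarrow> real"
  assumes p: "0 < p" "p < 1" and k: "k > 0" and fnn: "\<forall>a\<in>Lm k. f k a \<ge> 0"
    and fu: "uopt (f k) k (replicate k True)" and Sf: "Sol p (f k) k Vf" and Vfnn: "\<forall>a\<in>Lm k. Vf a \<ge> 0"
  shows "\<exists>V. Sol p (LO_k f (N * k) k) (N * k) V \<and> (\<forall>y\<in>Lm (N * k). V y \<ge> 0) \<and>
     (\<Sum>y\<in>Lm (N * k). V y) = (\<Sum>a\<in>Lm k. Vf a) * (\<Sum>i<N. (1 / (1 - p) ^ k) ^ i) \<and>
     (\<forall>y\<in>Lm (N * k). LO_k f (N * k) k y \<ge> 0) \<and> uopt (LO_k f (N * k) k) (N * k) (replicate (N * k) True)"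
proof (induction N)
  case 0
  have L0: "Lm 0 = {[]}" by (auto simp: Lm_def)
  show ?case
    by (rule exI[of _ "\<lambda>_. 0"]) (auto simp: Sol_def is_opt_def uopt_def L0 LO_k_def Lm_def)
next
  case (Suc N)
  define G where "G = LO_k f (N * k) k"
  from Suc obtain VG where VG: "Sol p G (N * k) VG" "\<forall>y\<in>Lm (N * k). VG y \<ge> 0"
    "(\<Sum>y\<in>Lm (N * k). VG y) = (\<Sum>a\<in>Lm k. Vf a) * (\<Sum>i<N. (1 / (1 - p) ^ k) ^ i)"
    and Gnn: "\<forall>y\<in>Lm (N * k). G y \<ge> 0" and Gu: "uopt G (N * k) (replicate (N * k) True)"
    unfolding G_def by blast
  have eqk: "Suc N * k = k + N * k" by simp
  have Fdef: "\<forall>a\<in>Lm k. \<forall>r\<in>Lm (N * k). LO_k f (k + N * k) k (a @ r) = f k a + (if a = replicate k True then G r else 0)"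
    using LO_split[OF k, of _ _ N f] unfolding eqk G_def by (simp add: Lm_def)
  have FP: "(\<forall>y\<in>Lm (k + N * k). LO_k f (k + N * k) k y \<ge> 0) \<and> uopt (LO_k f (k + N * k) k) (k + N * k) (replicate (k + N * k) True)"
    by (rule Fprops[OF fnn fu Gnn Gu Fdef])
  obtain V where V: "Sol p (LO_k f (k + N * k) k) (k + N * k) V" "\<forall>y\<in>Lm (k + N * k). V y \<ge> 0"
    "(\<Sum>y\<in>Lm (k + N * k). V y) = (\<Sum>a\<in>Lm k. Vf a) + (\<Sum>r\<in>Lm (N * k). VG r) / (1 - p) ^ k"
    using Fstep[OF p fu Gnn Gu Fdef FP[THEN conjunct2] Sf Vfnn VG(1,2)] by blast
  have R: "(\<Sum>i<Suc N. (1 / (1 - p) ^ k) ^ i) = 1 + (1 / (1 - p) ^ k) * (\<Sum>i<N. (1 / (1 - p) ^ k) ^ i)"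
    by (rule geo_shift)
  have "(\<Sum>y\<in>Lm (k + N * k). V y) = (\<Sum>a\<in>Lm k. Vf a) * (\<Sum>i<Suc N. (1 / (1 - p) ^ k) ^ i)"
    unfolding V(3) VG(3) R by (simp add: algebra_simps)
  then show ?case unfolding eqk using V FP by blast
qed


lemma base_bound:
  assumes n: "n \<ge> (2::nat)"
  shows "(real n / (real n - 1)) ^ n \<le> 9"
proof -
  have n1: "real n - 1 > 0" using n by simp
  have "real n / (real n - 1) = 1 + 1 / (real n - 1)" using n1 by (simp add: field_simps)
  also have "\<dots> \<le> exp (1 / (real n - 1))" by (rule exp_ge_add_one_self)
  finally have b: "real n / (real n - 1) \<le> exp (1 / (real n - 1))" .
  have "(real n / (real n - 1)) ^ n \<le> exp (1 / (real n - 1)) ^ n"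
    using b n1 by (intro power_mono) auto
  also have "\<dots> = exp (real n * (1 / (real n - 1)))" using exp_of_nat_mult[of n "1 / (real n - 1)"] by simp
  also have "\<dots> \<le> exp (2 * 1)"
  proof -
    have "real n \<le> 2 * (real n - 1)" using n by simp
    then have "real n * (1 / (real n - 1)) \<le> 2" using n1 by (simp add: field_simps)
    then show ?thesis by simp
  qed
  also have "exp (2 * 1) = exp (1::real) ^ 2" using exp_of_nat_mult[of 2 "1::real"] by simp
  also have "\<dots> \<le> 3 ^ 2" using exp_le by (intro power_mono) auto
  finally show ?thesis by simp
qed

lemma theorem1_aux:
  fixes n k :: nat and f :: "nat \<Rightarrow> bool list \<Rightarrow> real"
  assumes n: "2 \<le> n" and k: "0 < k" and dvd: "k dvd n"
    and fnn0: "\<forall>m x. length x = m \<longrightarrow> 0 \<le> f m x"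
    and fu0: "\<forall>m x. length x = m \<longrightarrow> x \<noteq> replicate m True \<longrightarrow> f m x < f m (replicate m True)"
  shows "ea_runtime (1 / real n) (LO_k f n k) n
        = ea_runtime (1 / real n) (f k) k * ennreal (LO_ratio n k)
      \<and> ennreal 1 * ea_runtime (1 / real n) (f k) k * ennreal (real n / real k)
          \<le> ea_runtime (1 / real n) (LO_k f n k) n
      \<and> ea_runtime (1 / real n) (LO_k f n k) n
          \<le> ennreal 9 * ea_runtime (1 / real n) (f k) k * ennreal (real n / real k)"
proof (intro conjI)
  define p where "p = 1 / real n"
  have p: "0 < p" "p < 1" using n by (auto simp: p_def)
  have fnn: "\<forall>a\<in>Lm k. f k a \<ge> 0"
  proof
    fix a assume "a \<in> Lm k"
    then have "length a = k" by (simp add: Lm_def)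
    then show "f k a \<ge> 0" using fnn0 by blast
  qed
  have fu: "uopt (f k) k (replicate k True)"
    unfolding uopt_def
  proof (intro conjI ballI impI)
    show "length (replicate k True) = k" by simp
    fix y assume "y \<in> Lm k" "y \<noteq> replicate k True"
    moreover have "length y = k" using \<open>y \<in> Lm k\<close> by (simp add: Lm_def)
    ultimately show "f k y < f k (replicate k True)" using fu0 by blast
  qed
  obtain Vf where Vf: "Sol p (f k) k Vf" "\<forall>a\<in>Lm k. Vf a \<ge> 0"
    using G2[OF p uopt_is_opt[OF fu]] by blast
  define SF where "SF = (\<Sum>a\<in>Lm k. Vf a)"
  have SFnn: "SF \<ge> 0" using Vf(2) by (simp add: SF_def sum_nonneg)
  have rtf: "ea_runtime p (f k) k = ennreal SF"
    unfolding SF_def by (rule G1[OF p uopt_is_opt[OF fu] Vf])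
  define N where "N = n div k"
  have nN: "N * k = n" using dvd by (simp add: N_def)
  define R where "R = (\<Sum>i<N. (1 / (1 - p) ^ k) ^ i)"
  obtain V where V: "Sol p (LO_k f (N * k) k) (N * k) V" "\<forall>y\<in>Lm (N * k). V y \<ge> 0"
     "(\<Sum>y\<in>Lm (N * k). V y) = SF * R"
     and Lu: "uopt (LO_k f (N * k) k) (N * k) (replicate (N * k) True)"
    using LO_main[where f=f and k=k and Vf=Vf and N=N and p=p, OF p k fnn fu Vf] unfolding SF_def R_def by blast
  have rtL: "ea_runtime p (LO_k f n k) n = ennreal (SF * R)"
    using G1[OF p uopt_is_opt[OF Lu] V(1,2)] V(3) unfolding nN by simp
  define b where "b = real n / (real n - 1)"
  have b1: "b \<ge> 1" using n by (simp add: b_def)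
  have qx: "1 / (1 - p) ^ k = b ^ k"
  proof -
    have "1 - p = (real n - 1) / real n" using n by (simp add: p_def field_simps)
    then show ?thesis by (simp add: b_def power_divide)
  qed
  have RR: "R = (\<Sum>i<N. (b ^ k) ^ i)" by (simp add: R_def qx)
  have ratio: "R = LO_ratio n k"
  proof -
    have bk: "b ^ k > 1"
    proof -
      have "b > 1" using n by (simp add: b_def)
      then show ?thesis using k by (intro one_less_power) auto
    qed
    have "R = ((b ^ k) ^ N - 1) / (b ^ k - 1)" unfolding RR using bk by (intro geometric_sum) simp
    also have "(b ^ k) ^ N = b ^ n" by (simp add: power_mult[symmetric] nN[symmetric] mult.commute)
    finally show ?thesis by (simp add: LO_ratio_def b_def)
  qed
  have bn: "b ^ n \<le> 9" unfolding b_def by (rule base_bound[OF n])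
  have termb: "1 \<le> (b ^ k) ^ i \<and> (b ^ k) ^ i \<le> 9" if "i < N" for i
  proof
    show "1 \<le> (b ^ k) ^ i" using b1 by (intro one_le_power) simp
    have "(b ^ k) ^ i \<le> (b ^ k) ^ N" using b1 that by (intro power_increasing) (auto intro: one_le_power)
    also have "\<dots> = b ^ n" by (simp add: power_mult[symmetric] nN[symmetric] mult.commute)
    finally show "(b ^ k) ^ i \<le> 9" using bn by simp
  qed
  have Rlo: "real N \<le> R"
    using sum_bounded_below[of "{..<N}" 1 "\<lambda>i. (b ^ k) ^ i"] termb unfolding RR by simp
  have Rhi: "R \<le> 9 * real N"
    using sum_bounded_above[of "{..<N}" "\<lambda>i. (b ^ k) ^ i" 9] termb unfolding RR by (simp add: mult.commute)
  have nk: "real n / real k = real N"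
    using k nN[symmetric] by simp
  have Rnn: "R \<ge> 0" using Rlo by simp
  show "ea_runtime (1 / real n) (LO_k f n k) n = ea_runtime (1 / real n) (f k) k * ennreal (LO_ratio n k)"
    using rtL rtf SFnn Rnn by (simp add: p_def ratio[symmetric] ennreal_mult)
  show "ennreal 1 * ea_runtime (1 / real n) (f k) k * ennreal (real n / real k) \<le> ea_runtime (1 / real n) (LO_k f n k) n"
  proof -
    have "ennreal 1 * ennreal SF * ennreal (real N) = ennreal (SF * real N)" using SFnn by (simp add: ennreal_mult)
    also have "\<dots> \<le> ennreal (SF * R)" using SFnn Rlo by (intro ennreal_leI mult_left_mono)
    finally show ?thesis using rtL rtf nk by (simp add: p_def)
  qed
  show "ea_runtime (1 / real n) (LO_k f n k) n \<le> ennreal 9 * ea_runtime (1 / real n) (f k) k * ennreal (real n / real k)"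
  proof -
    have "ennreal (SF * R) \<le> ennreal (9 * SF * real N)"
      using SFnn Rhi by (intro ennreal_leI) (simp add: mult_left_mono mult.assoc mult.left_commute)
    also have "\<dots> = ennreal 9 * ennreal SF * ennreal (real N)" using SFnn by (simp add: ennreal_mult)
    finally show ?thesis using rtL rtf nk by (simp add: p_def)
  qed
qed


theorem theorem1:
  "\<exists>c C :: real. c > 0 \<and> C > 0 \<and>
    (\<forall>(n::nat) (k::nat) (f :: nat \<Rightarrow> bool list \<Rightarrow> real).
      n \<ge> 2 \<longrightarrow> k > 0 \<longrightarrow> k dvd n \<longrightarrow>
      (\<forall>m x. length x = m \<longrightarrow> f m x \<ge> 0) \<longrightarrow>
      (\<forall>m x. length x = m \<longrightarrow> x \<noteq> replicate m True \<longrightarrow> f m x < f m (replicate m True)) \<longrightarrow>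
      ea_runtime (1 / real n) (LO_k f n k) n
        = ea_runtime (1 / real n) (f k) k * ennreal (LO_ratio n k)
      \<and> ennreal c * ea_runtime (1 / real n) (f k) k * ennreal (real n / real k)
          \<le> ea_runtime (1 / real n) (LO_k f n k) n
      \<and> ea_runtime (1 / real n) (LO_k f n k) n
          \<le> ennreal C * ea_runtime (1 / real n) (f k) k * ennreal (real n / real k))"
proof -
  show ?thesis
    apply (rule exI[of _ "1::real"], rule exI[of _ "9::real"])
    apply (intro conjI)
      apply simp
     apply simp
    using theorem1_aux by blast
qed

end
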